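(* Let $q\in\mathbb{C}^\times$ be not a root of unity, $Q\in\mathbb{C}^\times$, $\varphi\in\mathbb{C}[x]^{\langle Q\rangle}$, and let $v_0$ be a highest weight vector of the $U_q(\mathfrak{sl}_2^{\langle Q\rangle}[x])$-module $L(\mathbf{u}^{\langle Q\rangle}(\varphi))$. Then, as formal Laurent series in $w$, $$\Psi^+(w)\cdot v_0=q^{\deg\varphi}\frac{\varphi^\flat(q^{-2}w)}{\varphi^\flat(w)}\big(\beta_\varphi^{-1}-Q\beta_\varphi w^{-1}\big)v_0.$$
   Context: $[k]=(q^k-q^{-k})/(q-q^{-1})$, $[x,y]=xy-yx$. $U_q(\mathfrak{sl}_2^{\langle Q\rangle}[x])$ is the $\mathbb{C}$-algebra with generators $X^\pm_t,J_t$ ($t\ge0$), $K^\pm$ and relations: $K^+$ and all $J_t$ pairwise commute; $K^+K^-=1=K^-K^+$; $(K^-)^2=1-(q-q^{-1})J_0$; $X^\pm_{t+1}X^\pm_s-q^{\pm2}X^\pm_sX^\pm_{t+1}=q^{\pm2}X^\pm_tX^\pm_{s+1}-X^\pm_{s+1}X^\pm_t$; $K^+X^\pm_tK^-=q^{\pm2}X^\pm_t$; $q^{\pm2}J_0X^\pm_t-q^{\mp2}X^\pm_tJ_0=\pm[2]X^\pm_t$; $[J_{s+1},X^\pm_t]=q^{\pm2}J_sX^\pm_{t+1}-q^{\mp2}X^\pm_{t+1}J_s$; $[X^+_t,X^-_s]=K^+(J_{s+t}-QJ_{s+t+1})$. Elements: $\Psi^+_{-1}=-QK^+$, $\Psi^+_0=K^+-(q-q^{-1})QK^+J_1$,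 $\Psi^+_t=(q-q^{-1})K^+(J_t-QJ_{t+1})$ for $t>0$; $\Psi^+(w)=\sum_{t\ge-1}\Psi^+_tw^t$. For $\mathbf{u}=(\lambda,(u_t)_{t>0})$, $L(\mathbf{u})$ is the simple module generated by a highest weight vector $v_0$: $X^+_tv_0=0$, $K^+v_0=\lambda v_0$, $J_tv_0=u_tv_0$ ($t>0$). With $p_t(q)(x_1,\dots,x_k)=\sum_{\lambda\vdash t,\ell(\lambda)\le k}q^{-\ell(\lambda)}(q-q^{-1})^{\ell(\lambda)-1}m_\lambda(x_1,\dots,x_k)$, $\tilde\beta=(q-q^{-1})^{-1}(1-\beta^{-2})$ and $p^{\langle Q\rangle}_t(q;\beta)=p_t(q)+\tilde\beta Q^{-t}+(q-q^{-1})\sum_{z=1}^{t-1}\tilde\beta Q^{-t+z}p_z(q)$: for nonzero $\varphi=\beta_\varphi(x-\gamma_1)\cdots(x-\gamma_k)$, $\mathbf{u}^{\langle Q\rangle}(\varphi)=(\beta_\varphi,(\tilde\beta_\varphi Q^{-t})_{t>0})$ if $k=0$ and $(\beta_\varphi q^k,(p^{\langle Q\rangle}_t(q;\beta_\varphi)(\gamma_1,\dots,\gamma_k))_{t>0})$ if $k>0$. $\mathbb{C}[x]^{\langle Q\rangle}=\{\varphi\ne0:\beta_\varphi^{-2}Q^{-1}\text{ not a root of }\varphi\}$. $\varphi^\flat(w)=(1-\gamma_1w)\cdots(1-\gamma_kw)$. *)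

theory Defs
  imports Complex_Main "HOL-Computational_Algebra.Polynomial"
    "HOL-Computational_Algebra.Polynomial_FPS"
    "HOL-Computational_Algebra.Formal_Laurent_Series"
begin

definition qnum :: "complex \<Rightarrow> int \<Rightarrow> complex" where
  "qnum q n = (q powi n - q powi (-n)) / (q - inverse q)"

definition is_UqQ_rep ::
  "complex \<Rightarrow> complex \<Rightarrow> (complex \<Rightarrow> 'v::ab_group_add \<Rightarrow> 'v) \<Rightarrow>
   (nat \<Rightarrow> 'v \<Rightarrow> 'v) \<Rightarrow> (nat \<Rightarrow> 'v \<Rightarrow> 'v) \<Rightarrow> (nat \<Rightarrow> 'v \<Rightarrow> 'v) \<Rightarrow>
   ('v \<Rightarrow> 'v) \<Rightarrow> ('v \<Rightarrow> 'v) \<Rightarrow> bool" where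
  "is_UqQ_rep q Q sc Xp Xm J Kp Km \<longleftrightarrow>
     vector_space sc \<and>
     (\<forall>t. Vector_Spaces.linear sc sc (Xp t)) \<and>
     (\<forall>t. Vector_Spaces.linear sc sc (Xm t)) \<and>
     (\<forall>t. Vector_Spaces.linear sc sc (J t)) \<and>
     Vector_Spaces.linear sc sc Kp \<and> Vector_Spaces.linear sc sc Km \<and>
     (\<forall>v.
       (\<forall>t. Kp (J t v) = J t (Kp v)) \<and>
       (\<forall>s t. J s (J t v) = J t (J s v)) \<and>
       Kp (Km v) = v \<and> Km (Kp v) = v \<and>
       Km (Km v) = v - sc (q - inverse q) (J 0 v) \<and>
       (\<forall>s t. Xp (t+1) (Xp s v) - sc (q^2) (Xp s (Xp (t+1) v))
              = sc (q^2) (Xp t (Xp (s+1) v)) - Xp (s+1) (Xp t v)) \<and>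
       (\<forall>s t. Xm (t+1) (Xm s v) - sc (inverse q ^ 2) (Xm s (Xm (t+1) v))
              = sc (inverse q ^ 2) (Xm t (Xm (s+1) v)) - Xm (s+1) (Xm t v)) \<and>
       (\<forall>t. Kp (Xp t (Km v)) = sc (q^2) (Xp t v)) \<and>
       (\<forall>t. Kp (Xm t (Km v)) = sc (inverse q ^ 2) (Xm t v)) \<and>
       (\<forall>t. sc (q^2) (J 0 (Xp t v)) - sc (inverse q ^ 2) (Xp t (J 0 v))
              = sc (qnum q 2) (Xp t v)) \<and>
       (\<forall>t. sc (inverse q ^ 2) (J 0 (Xm t v)) - sc (q^2) (Xm t (J 0 v))
              = - sc (qnum q 2) (Xm t v)) \<and>
       (\<forall>s t. J (s+1) (Xp t v) - Xp t (J (s+1) v)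
              = sc (q^2) (J s (Xp (t+1) v)) - sc (inverse q ^ 2) (Xp (t+1) (J s v))) \<and>
       (\<forall>s t. J (s+1) (Xm t v) - Xm t (J (s+1) v)
              = sc (inverse q ^ 2) (J s (Xm (t+1) v)) - sc (q^2) (Xm (t+1) (J s v))) \<and>
       (\<forall>s t. Xp t (Xm s v) - Xm s (Xp t v)
              = Kp (J (s+t) v - sc Q (J (s+t+1) v))))"

definition is_simple_rep ::
  "(complex \<Rightarrow> 'v::ab_group_add \<Rightarrow> 'v) \<Rightarrow>
   (nat \<Rightarrow> 'v \<Rightarrow> 'v) \<Rightarrow> (nat \<Rightarrow> 'v \<Rightarrow> 'v) \<Rightarrow> (nat \<Rightarrow> 'v \<Rightarrow> 'v) \<Rightarrow>
   ('v \<Rightarrow> 'v) \<Rightarrow> ('v \<Rightarrow> 'v) \<Rightarrow> bool" where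
  "is_simple_rep sc Xp Xm J Kp Km \<longleftrightarrow>
     (UNIV :: 'v set) \<noteq> {0} \<and>
     (\<forall>W. module.subspace sc W \<and>
          (\<forall>w\<in>W. (\<forall>t. Xp t w \<in> W \<and> Xm t w \<in> W \<and> J t w \<in> W) \<and> Kp w \<in> W \<and> Km w \<in> W)
          \<longrightarrow> W = {0} \<or> W = UNIV)"

definition is_hw_vector ::
  "(complex \<Rightarrow> 'v::ab_group_add \<Rightarrow> 'v) \<Rightarrow>
   (nat \<Rightarrow> 'v \<Rightarrow> 'v) \<Rightarrow> (nat \<Rightarrow> 'v \<Rightarrow> 'v) \<Rightarrow> ('v \<Rightarrow> 'v) \<Rightarrow>
   complex \<Rightarrow> (nat \<Rightarrow> complex) \<Rightarrow> 'v \<Rightarrow> bool" where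
  "is_hw_vector sc Xp J Kp lam u v0 \<longleftrightarrow>
     v0 \<noteq> 0 \<and> (\<forall>t. Xp t v0 = 0) \<and> Kp v0 = sc lam v0 \<and>
     (\<forall>t>0. J t v0 = sc (u t) v0)"

text \<open>Coefficients Psi^+_t (t :: int) of Psi^+(w); zero for t < -1.\<close>
definition PsiP ::
  "complex \<Rightarrow> complex \<Rightarrow> (complex \<Rightarrow> 'v::ab_group_add \<Rightarrow> 'v) \<Rightarrow>
   (nat \<Rightarrow> 'v \<Rightarrow> 'v) \<Rightarrow> ('v \<Rightarrow> 'v) \<Rightarrow> int \<Rightarrow> 'v \<Rightarrow> 'v" where
  "PsiP q Q sc J Kp t v =
     (if t = -1 then - sc Q (Kp v)
      else if t = 0 then Kp v - sc ((q - inverse q) * Q) (Kp (J 1 v))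
      else if t > 0 then sc (q - inverse q) (Kp (J (nat t) v - sc Q (J (nat t + 1) v)))
      else 0)"

text \<open>p_t(q)(x_1,...,x_k) = sum over partitions lambda of t with at most k parts of
  q^(-l(lambda)) (q-q^(-1))^(l(lambda)-1) m_lambda(x).  Unfolding the monomial symmetric
  functions m_lambda, this is the sum over all exponent vectors a : {0..<k} -> nat with
  |a| = t of the same weight (l = number of nonzero entries of a) times x^a.\<close>
definition p_poly :: "complex \<Rightarrow> nat \<Rightarrow> complex list \<Rightarrow> complex" where
  "p_poly q t xs =
     (\<Sum>a\<in>{a :: nat \<Rightarrow> nat. (\<forall>i\<ge>length xs. a i = 0) \<and> (\<Sum>i<length xs. a i) = t}.
        (let l = card {i. i < length xs \<and> a i \<noteq> 0} in
           inverse q ^ l * (q - inverse q) powi (int l - 1)) *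
        (\<Prod>i<length xs. (xs ! i) ^ a i))"

definition beta_tilde :: "complex \<Rightarrow> complex \<Rightarrow> complex" where
  "beta_tilde q \<beta> = (1 - inverse (\<beta>^2)) / (q - inverse q)"

definition p_polyQ :: "complex \<Rightarrow> complex \<Rightarrow> complex \<Rightarrow> nat \<Rightarrow> complex list \<Rightarrow> complex" where
  "p_polyQ q Q \<beta> t xs =
     p_poly q t xs + beta_tilde q \<beta> * Q powi (- int t) +
     (q - inverse q) * (\<Sum>z\<in>{1..<t}. beta_tilde q \<beta> * Q powi (int z - int t) * p_poly q z xs)"

definition phi_poly :: "complex \<Rightarrow> complex list \<Rightarrow> complex poly" where
  "phi_poly \<beta> gs = smult \<beta> (\<Prod>g\<leftarrow>gs. [:-g, 1:])"

text \<open>u^<Q>(phi): returns (lambda, (u_t)_t) (u_0 is irrelevant).\<close>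
definition uQ_lam :: "complex \<Rightarrow> complex \<Rightarrow> complex list \<Rightarrow> complex" where
  "uQ_lam q \<beta> gs = (if gs = [] then \<beta> else \<beta> * q ^ length gs)"

definition uQ_u :: "complex \<Rightarrow> complex \<Rightarrow> complex \<Rightarrow> complex list \<Rightarrow> nat \<Rightarrow> complex" where
  "uQ_u q Q \<beta> gs t =
     (if gs = [] then beta_tilde q \<beta> * Q powi (- int t) else p_polyQ q Q \<beta> t gs)"

definition phi_flat :: "complex list \<Rightarrow> complex poly" where
  "phi_flat gs = (\<Prod>g\<leftarrow>gs. [:1, -g:])"

definition poly_fls :: "complex poly \<Rightarrow> complex fls" where
  "poly_fls p = fps_to_fls (fps_of_poly p)"

definition rhs_series :: "complex \<Rightarrow> complex \<Rightarrow> complex \<Rightarrow> complex list \<Rightarrow> complex fls" where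
  "rhs_series q Q \<beta> gs =
     fls_const (q ^ length gs) *
     poly_fls (pcompose (phi_flat gs) [:0, inverse q ^ 2:]) / poly_fls (phi_flat gs) *
     (fls_const (inverse \<beta>) - fls_const (Q * \<beta>) * fls_X_inv)"

end

theory Submission
  imports Defs
begin


definition Aset :: "nat \<Rightarrow> nat \<Rightarrow> (nat \<Rightarrow> nat) set" where
  "Aset n t = {a. (\<forall>i\<ge>n. a i = 0) \<and> (\<Sum>i<n. a i) = t}"

lemma Aset_finite: "finite (Aset n t)"
proof -
  have "Aset n t \<subseteq> {f. \<forall>x. (x \<in> {..<n} \<longrightarrow> f x \<in> {..t}) \<and> (x \<notin> {..<n} \<longrightarrow> f x = 0)}"
  proof
    fix a assume a: "a \<in> Aset n t"
    have "\<forall>x<n. a x \<le> t"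
    proof (intro allI impI)
      fix x assume "x < n"
      then have "a x \<le> (\<Sum>i<n. a i)" by (intro member_le_sum) auto
      then show "a x \<le> t" using a by (simp add: Aset_def)
    qed
    then show "a \<in> {f. \<forall>x. (x \<in> {..<n} \<longrightarrow> f x \<in> {..t}) \<and> (x \<notin> {..<n} \<longrightarrow> f x = 0)}"
      using a by (auto simp: Aset_def)
  qed
  moreover have "finite {f. \<forall>x. (x \<in> {..<n} \<longrightarrow> f x \<in> {..t}) \<and> (x \<notin> {..<n} \<longrightarrow> f x = (0::nat))}"
    by (rule finite_set_of_finite_funs) auto
  ultimately show ?thesis by (rule finite_subset)
qed

lemma Aset_0: "Aset 0 t = (if t = 0 then {\<lambda>_. 0} else {})"
  by (auto simp: Aset_def)

lemma coef_prod:
  fixes e :: "nat \<Rightarrow> nat \<Rightarrow> complex"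
  shows "(\<Prod>i<n. Abs_fps (e i)) $ t = (\<Sum>a\<in>Aset n t. \<Prod>i<n. e i (a i))"
proof (induction n arbitrary: t)
  case 0
  then show ?case by (simp add: Aset_0)
next
  case (Suc n)
  have "(\<Prod>i<Suc n. Abs_fps (e i)) $ t = (\<Sum>j=0..t. (\<Prod>i<n. Abs_fps (e i)) $ j * e n (t - j))"
    by (simp add: fps_mult_nth)
  also have "\<dots> = (\<Sum>j=0..t. \<Sum>a\<in>Aset n j. (\<Prod>i<n. e i (a i)) * e n (t - j))"
    by (simp add: Suc.IH sum_distrib_right)
  also have "\<dots> = (\<Sum>(j,a)\<in>Sigma {0..t} (Aset n). (\<Prod>i<n. e i (a i)) * e n (t - j))"
    by (rule sum.Sigma) (auto simp: Aset_finite)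
  also have "\<dots> = (\<Sum>a\<in>Aset (Suc n) t. \<Prod>i<Suc n. e i (a i))"
  proof (rule sum.reindex_bij_witness[where i = "\<lambda>a. (t - a n, a(n := 0))" and j = "\<lambda>(j,a). a(n := t - j)"])
    fix a assume a: "a \<in> Aset (Suc n) t"
    then have s: "(\<Sum>i<n. a i) + a n = t" by (simp add: Aset_def)
    show "(case (t - a n, a(n := 0)) of (j, a) \<Rightarrow> a(n := t - j)) = a"
      using s by auto
    show "(t - a n, a(n := 0)) \<in> Sigma {0..t} (Aset n)"
      using a s by (auto simp: Aset_def)
  next
    fix ja assume ja: "ja \<in> Sigma {0..t} (Aset n)"
    obtain j b where jb: "ja = (j, b)" by force
    have b: "\<forall>i\<ge>n. b i = 0" "(\<Sum>i<n. b i) = j" "j \<le> t" using ja jb by (auto simp: Aset_def)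
    have sb: "(\<Sum>i<n. (b(n := t - j)) i) = j" using b by (auto intro: sum.cong)
    show "(t - (case ja of (j, a) \<Rightarrow> a(n := t - j)) n, (case ja of (j, a) \<Rightarrow> a(n := t - j))(n := 0)) = ja"
      using jb b by auto
    show "(case ja of (j, a) \<Rightarrow> a(n := t - j)) \<in> Aset (Suc n) t"
      using jb b sb by (auto simp: Aset_def)
    show "(\<Prod>i<Suc n. e i ((case ja of (j, a) \<Rightarrow> a(n := t - j)) i)) = (case ja of (j, a) \<Rightarrow> (\<Prod>i<n. e i (a i)) * e n (t - j))"
      using jb b by (auto intro!: prod.cong)
  qed
  finally show ?case .
qed

definition ee :: "complex \<Rightarrow> complex list \<Rightarrow> nat \<Rightarrow> nat \<Rightarrow> complex" where
  "ee q xs i m = (if m = 0 then 1 else (1 - inverse q ^ 2) * (xs ! i) ^ m)"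

lemma p_poly_coef:
  assumes q: "q \<noteq> 0" and t: "t \<ge> 1"
  shows "(q - inverse q) * p_poly q t xs = (\<Prod>i<length xs. Abs_fps (ee q xs i)) $ t"
proof -
  let ?n = "length xs"
  let ?c = "q - inverse q"
  have "?c * p_poly q t xs = (\<Sum>a\<in>Aset ?n t. \<Prod>i<?n. ee q xs i (a i))"
    unfolding p_poly_def Aset_def[symmetric] sum_distrib_left
  proof (rule sum.cong[OF refl])
    fix a assume a: "a \<in> Aset ?n t"
    define L where "L = {i. i < ?n \<and> a i \<noteq> 0}"
    have fL: "finite L" by (simp add: L_def)
    have "L \<noteq> {}"
    proof
      assume "L = {}"
      then have "\<forall>i<?n. a i = 0" by (auto simp: L_def)
      then have "(\<Sum>i<?n. a i) = 0" by simp
      with a t show False by (simp add: Aset_def)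
    qed
    then have l: "card L \<ge> 1" using fL by (simp add: Suc_le_eq card_gt_0_iff)
    have L': "{i \<in> {..<?n}. a i \<noteq> 0} = L" by (auto simp: L_def)
    have "(\<Prod>i<?n. ee q xs i (a i)) = (\<Prod>i<?n. (if a i \<noteq> 0 then (1 - inverse q ^ 2) else 1) * (xs ! i) ^ a i)"
      by (rule prod.cong) (auto simp: ee_def)
    also have "\<dots> = (\<Prod>i<?n. (if a i \<noteq> 0 then (1 - inverse q ^ 2) else 1)) * (\<Prod>i<?n. (xs ! i) ^ a i)"
      by (rule prod.distrib)
    also have "(\<Prod>i<?n. (if a i \<noteq> 0 then (1 - inverse q ^ 2) else 1)) = (1 - inverse q ^ 2) ^ card L"
    proof -
      have "(\<Prod>i<?n. (if a i \<noteq> 0 then (1 - inverse q ^ 2) else 1)) = (\<Prod>i\<in>{i\<in>{..<?n}. a i \<noteq> 0}. (1 - inverse q ^ 2))"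
        by (rule prod.inter_filter[symmetric]) simp
      then show ?thesis unfolding L' by simp
    qed
    also have "(1 - inverse q ^ 2) = inverse q * ?c" using q by (simp add: field_simps power2_eq_square)
    also have "(inverse q * ?c) ^ card L = ?c * (inverse q ^ card L * ?c powi (int (card L) - 1))"
    proof -
      have e1: "?c powi (int (card L) - 1) = ?c ^ (card L - 1)" using l
        by (metis of_nat_1 of_nat_diff power_int_of_nat)
      have e2: "?c ^ card L = ?c * ?c ^ (card L - 1)" using l
        by (metis Suc_diff_1 less_le_trans power_Suc zero_less_one)
      show ?thesis unfolding e1 power_mult_distrib e2 by (simp only: mult_ac)
    qed
    finally show "?c * ((let l = card {i. i < ?n \<and> a i \<noteq> 0} in inverse q ^ l * ?c powi (int l - 1)) *
          (\<Prod>i<?n. (xs ! i) ^ a i)) = (\<Prod>i<?n. ee q xs i (a i))"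
      by (simp add: L_def Let_def)
  qed
  also have "\<dots> = (\<Prod>i<length xs. Abs_fps (ee q xs i)) $ t" by (rule coef_prod[symmetric])
  finally show ?thesis .
qed

lemma factor_lemma:
  fixes x r :: complex
  shows "fps_of_poly [:1, -x:] * Abs_fps (\<lambda>m. if m = 0 then 1 else (1 - r) * x ^ m) = fps_of_poly [:1, -(x*r):]"
proof -
  let ?E = "Abs_fps (\<lambda>m. if m = 0 then 1 else (1 - r) * x ^ m)"
  have p1: "fps_of_poly [:1, -x:] = 1 - fps_const x * fps_X"
    by (simp add: fps_of_poly_pCons mult.commute)
  have p2: "fps_of_poly [:1, -(x*r):] = 1 - fps_const (x*r) * fps_X"
    by (simp add: fps_of_poly_pCons mult.commute)
  show ?thesis unfolding p1 p2
  proof (rule fps_ext)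
    fix n
    have "((1 - fps_const x * fps_X) * ?E) $ n = ?E $ n - x * (fps_X * ?E) $ n"
      by (simp only: left_diff_distrib mult_1_left mult.assoc fps_sub_nth fps_mult_left_const_nth)
    also have "\<dots> = (if n = 0 then 1 else (1 - r) * x ^ n) - x * (if n = 0 then 0 else (if n - 1 = 0 then 1 else (1 - r) * x ^ (n - 1)))"
      by (simp only: fps_X_mult_nth fps_nth_Abs_fps)
    also have "\<dots> = (1 - fps_const (x * r) * fps_X) $ n"
    proof (cases n)
      case 0 then show ?thesis by simp
    next
      case (Suc m)
      show ?thesis
      proof (cases m)
        case 0 then show ?thesis using Suc by (simp add: algebra_simps)
      next
        case (Suc k)
        then show ?thesis using \<open>n = Suc m\<close> by (simp add: right_diff_distrib)
      qed
    qed
    finally show "((1 - fps_const x * fps_X) * ?E) $ n = (1 - fps_const (x * r) * fps_X) $ n" .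
  qed
qed

lemma ee_Cons0: "ee q (x # xs) 0 = (\<lambda>m. if m = 0 then 1 else (1 - inverse q ^ 2) * x ^ m)"
  by (auto simp: ee_def fun_eq_iff)

lemma ee_Cons_Suc: "ee q (x # xs) (Suc i) = ee q xs i"
  by (auto simp: ee_def fun_eq_iff)

lemma key_prod:
  "fps_of_poly (phi_flat xs) * (\<Prod>i<length xs. Abs_fps (ee q xs i)) =
   fps_of_poly (pcompose (phi_flat xs) [:0, inverse q ^ 2:])"
proof (induction xs)
  case Nil
  then show ?case by (simp add: phi_flat_def pcompose_1)
next
  case (Cons x xs)
  have pc: "pcompose [:1, -x:] [:0, inverse q ^ 2:] = [:1, -(x * inverse q ^ 2):]"
    by (simp add: pcompose_pCons)
  have "fps_of_poly (phi_flat (x # xs)) * (\<Prod>i<length (x # xs). Abs_fps (ee q (x # xs) i))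
      = (fps_of_poly [:1, -x:] * Abs_fps (ee q (x # xs) 0)) *
        (fps_of_poly (phi_flat xs) * (\<Prod>i<length xs. Abs_fps (ee q xs i)))"
    by (simp add: phi_flat_def fps_of_poly_mult prod.lessThan_Suc_shift ee_Cons_Suc mult_ac del: prod.lessThan_Suc)
  also have "\<dots> = fps_of_poly [:1, -(x * inverse q ^ 2):] * fps_of_poly (pcompose (phi_flat xs) [:0, inverse q ^ 2:])"
    unfolding Cons.IH ee_Cons0 factor_lemma ..
  also have "\<dots> = fps_of_poly (pcompose (phi_flat (x # xs)) [:0, inverse q ^ 2:])"
  proof -
    have "phi_flat (x # xs) = [:1, -x:] * phi_flat xs" by (simp add: phi_flat_def)
    then have "pcompose (phi_flat (x # xs)) [:0, inverse q ^ 2:] = [:1, -(x * inverse q ^ 2):] * pcompose (phi_flat xs) [:0, inverse q ^ 2:]"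
      by (simp only: pcompose_mult pc)
    then show ?thesis by (simp only: fps_of_poly_mult)
  qed
  finally show ?case .
qed



lemma Aset_zero: "Aset n 0 = {\<lambda>_. 0}"
proof (rule set_eqI)
  fix a :: "nat \<Rightarrow> nat"
  show "a \<in> Aset n 0 \<longleftrightarrow> a \<in> {\<lambda>_. 0}"
  proof
    assume "a \<in> Aset n 0"
    then have h: "\<forall>i\<ge>n. a i = 0" "(\<Sum>i<n. a i) = 0" by (auto simp: Aset_def)
    have h2: "\<forall>i<n. a i = 0" using h(2) by simp
    have "a = (\<lambda>_. 0)"
    proof
      fix i show "a i = 0" using h(1) h2 by (cases "i < n") auto
    qed
    then show "a \<in> {\<lambda>_. 0}" by simp
  qed (simp add: Aset_def)
qed

lemma coef0: "(\<Prod>i<n. Abs_fps (ee q xs i)) $ 0 = 1"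
  by (simp only: coef_prod Aset_zero) (simp add: ee_def)

lemma Qpow: assumes "z \<le> t" shows "(Q::complex) powi (int z - int t) = inverse Q ^ (t - z)"
proof -
  have "int z - int t = - int (t - z)" using assms by simp
  then show ?thesis by (simp only: power_int_minus power_int_of_nat power_inverse)
qed

lemma scalar_u:
  fixes q Q \<beta> :: complex and gs :: "complex list"
  assumes q: "q \<noteq> 0" and c: "q - inverse q \<noteq> 0" and t: "t \<ge> 1"
  defines "f \<equiv> \<lambda>m. (\<Prod>i<length gs. Abs_fps (ee q gs i)) $ m"
  shows "(q - inverse q) * uQ_u q Q \<beta> gs t =
     f t + (1 - inverse (\<beta>^2)) * (\<Sum>z<t. inverse Q ^ (t - z) * f z)"
proof -
  let ?c = "q - inverse q"
  let ?b = "1 - inverse (\<beta>^2)"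
  have cb: "?c * beta_tilde q \<beta> = ?b" using c by (simp add: beta_tilde_def)
  have pf: "?c * p_poly q z gs = f z" if "z \<ge> 1" for z
    using p_poly_coef[OF q that] by (simp add: f_def)
  have f0: "f 0 = 1" by (simp add: f_def coef0)
  have U: "uQ_u q Q \<beta> gs t = p_polyQ q Q \<beta> t gs"
  proof (cases "gs = []")
    case True
    have "p_poly q z gs = 0" if "z \<ge> 1" for z
    proof -
      have "?c * p_poly q z gs = 0" using pf[OF that] True that by (simp add: f_def)
      then show ?thesis using c by simp
    qed
    then show ?thesis using True t by (simp add: uQ_u_def p_polyQ_def)
  next
    case False then show ?thesis by (simp add: uQ_u_def)
  qed
  have "?c * p_polyQ q Q \<beta> t gs = f t + ?b * inverse Q ^ t +
      (\<Sum>z\<in>{1..<t}. ?b * (inverse Q ^ (t - z) * f z))"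
  proof -
    have s: "?c * (?c * (\<Sum>z\<in>{1..<t}. beta_tilde q \<beta> * Q powi (int z - int t) * p_poly q z gs))
       = (\<Sum>z\<in>{1..<t}. ?b * (inverse Q ^ (t - z) * f z))"
      unfolding sum_distrib_left
    proof (rule sum.cong[OF refl])
      fix z assume z: "z \<in> {1..<t}"
      have "?c * (?c * (beta_tilde q \<beta> * Q powi (int z - int t) * p_poly q z gs)) =
         (?c * beta_tilde q \<beta>) * Q powi (int z - int t) * (?c * p_poly q z gs)"
        by (simp only: mult_ac)
      also have "\<dots> = ?b * (inverse Q ^ (t - z) * f z)"
        using z by (simp add: cb pf Qpow)
      finally show "?c * (?c * (beta_tilde q \<beta> * Q powi (int z - int t) * p_poly q z gs)) = ?b * (inverse Q ^ (t - z) * f z)" .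
    qed
    have "?c * (beta_tilde q \<beta> * Q powi (- int t)) = ?b * inverse Q ^ t"
      using Qpow[of 0 t Q] cb by (simp add: mult.assoc[symmetric])
    then show ?thesis unfolding p_polyQ_def distrib_left s pf[OF t] by simp
  qed
  also have "\<dots> = f t + ?b * (\<Sum>z<t. inverse Q ^ (t - z) * f z)"
  proof -
    have "(\<Sum>z<t. inverse Q ^ (t - z) * f z) = (\<Sum>z\<in>{0..<t}. inverse Q ^ (t - z) * f z)"
      by (simp add: atLeast0LessThan)
    also have "\<dots> = inverse Q ^ t * f 0 + (\<Sum>z\<in>{1..<t}. inverse Q ^ (t - z) * f z)"
      using t by (subst sum.atLeast_Suc_lessThan) auto
    finally show ?thesis by (simp add: f0 distrib_left sum_distrib_left)
  qed
  finally show ?thesis using U by simp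
qed

lemma phi_flat_nz: "phi_flat gs \<noteq> 0"
  unfolding phi_flat_def by (auto simp: prod_list_zero_iff)

lemma rhs_nth:
  fixes q Q \<beta> :: complex and gs :: "complex list"
  shows "fls_nth (rhs_series q Q \<beta> gs) t =
     q ^ length gs * (inverse \<beta> * fls_nth (fps_to_fls (\<Prod>i<length gs. Abs_fps (ee q gs i))) t
       - Q * \<beta> * fls_nth (fps_to_fls (\<Prod>i<length gs. Abs_fps (ee q gs i))) (t + 1))"
proof -
  let ?P = "\<Prod>i<length gs. Abs_fps (ee q gs i)"
  let ?G = "fps_to_fls ?P"
  have nz: "poly_fls (phi_flat gs) \<noteq> 0"
  proof
    assume "poly_fls (phi_flat gs) = 0"
    then have "fps_of_poly (phi_flat gs) = fps_of_poly 0" by (simp add: poly_fls_def)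
    then show False using phi_flat_nz by (simp only: fps_of_poly_eq_iff)
  qed
  have "poly_fls (pcompose (phi_flat gs) [:0, inverse q ^ 2:]) = poly_fls (phi_flat gs) * ?G"
    unfolding poly_fls_def key_prod[symmetric, of gs q] fls_times_fps_to_fls ..
  then have d: "poly_fls (pcompose (phi_flat gs) [:0, inverse q ^ 2:]) / poly_fls (phi_flat gs) = ?G"
    using nz by simp
  have "rhs_series q Q \<beta> gs = fls_const (q ^ length gs) * ?G * (fls_const (inverse \<beta>) - fls_const (Q * \<beta>) * fls_X_inv)"
    unfolding rhs_series_def d[symmetric] by (simp only: times_divide_eq_right)
  also have "\<dots> = fls_const (q ^ length gs) * (fls_const (inverse \<beta>) * ?G) - fls_const (q ^ length gs) * (fls_const (Q * \<beta>) * fls_shift 1 ?G)"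
    by (simp add: fls_X_inv_times_conv_shift(2)[symmetric] algebra_simps)
  finally have eq: "rhs_series q Q \<beta> gs = fls_const (q ^ length gs) * (fls_const (inverse \<beta>) * ?G) - fls_const (q ^ length gs) * (fls_const (Q * \<beta>) * fls_shift 1 ?G)" .
  show ?thesis
    by (simp only: eq fls_minus_nth fls_mult_const_nth(1) fls_shift_nth) (simp add: right_diff_distrib)
qed

theorem mainTheorem8:
  fixes q Q \<beta> :: complex and gs :: "complex list"
    and sc :: "complex \<Rightarrow> 'v::ab_group_add \<Rightarrow> 'v"
    and Xp Xm J :: "nat \<Rightarrow> 'v \<Rightarrow> 'v" and Kp Km :: "'v \<Rightarrow> 'v" and v0 :: 'v
  assumes "q \<noteq> 0" and "\<forall>n::nat. n > 0 \<longrightarrow> q ^ n \<noteq> 1"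
    and "Q \<noteq> 0"
    and "\<beta> \<noteq> 0"
    and "poly (phi_poly \<beta> gs) (inverse (\<beta>^2 * Q)) \<noteq> 0"
    and "is_UqQ_rep q Q sc Xp Xm J Kp Km"
    and "is_simple_rep sc Xp Xm J Kp Km"
    and "is_hw_vector sc Xp J Kp (uQ_lam q \<beta> gs) (uQ_u q Q \<beta> gs) v0"
  shows "\<forall>t::int. PsiP q Q sc J Kp t v0 = sc (fls_nth (rhs_series q Q \<beta> gs) t) v0"
proof
  fix t :: int
  have vs: "vector_space sc" and linK: "Vector_Spaces.linear sc sc Kp"
    using assms(6) by (simp_all add: is_UqQ_rep_def)
  interpret vs: vector_space sc by (rule vs)
  interpret K: Vector_Spaces.linear sc sc Kp by (rule linK)
  let ?n = "length gs"
  let ?c = "q - inverse q"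
  let ?b = "1 - inverse (\<beta>^2)"
  define lam where "lam = \<beta> * q ^ ?n"
  define U where "U = uQ_u q Q \<beta> gs"
  define f where "f = (\<lambda>m. (\<Prod>i<length gs. Abs_fps (ee q gs i)) $ m)"
  define S where "S = (\<lambda>t. \<Sum>z<t. inverse Q ^ (t - z) * f z)"
  have lamdef: "uQ_lam q \<beta> gs = lam" by (simp add: uQ_lam_def lam_def)
  have Kv: "Kp v0 = sc lam v0" using assms(8) lamdef by (simp add: is_hw_vector_def)
  have Jv: "J m v0 = sc (U m) v0" if "m > 0" for m
    using assms(8) that by (simp add: is_hw_vector_def U_def)
  have c: "?c \<noteq> 0"
  proof
    assume "?c = 0"
    then have "q * q = q * inverse q" by simp
    then have "q ^ 2 = 1" using assms(1) by (simp add: power2_eq_square)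
    then show False using assms(2) by auto
  qed
  have cU: "?c * U m = f m + ?b * S m" if "m \<ge> 1" for m
    using scalar_u[OF assms(1) c that, of Q \<beta> gs] by (simp add: U_def f_def S_def)
  have f0: "f 0 = 1" by (simp add: f_def coef0)
  have S1: "S (Suc m) = inverse Q * (S m + f m)" for m
  proof -
    have "S (Suc m) = (\<Sum>z<m. inverse Q ^ (Suc m - z) * f z) + inverse Q ^ (Suc m - m) * f m"
      by (simp add: S_def)
    also have "(\<Sum>z<m. inverse Q ^ (Suc m - z) * f z) = inverse Q * (\<Sum>z<m. inverse Q ^ (m - z) * f z)"
      unfolding sum_distrib_left
      by (rule sum.cong[OF refl]) (simp add: Suc_diff_le)
    finally show ?thesis by (simp add: S_def distrib_left)
  qed
  have G: "fls_nth (fps_to_fls (\<Prod>i<length gs. Abs_fps (ee q gs i))) s = (if s < 0 then 0 else f (nat s))" for s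
    by (simp add: f_def)
  define Lsc where "Lsc = (if t = -1 then - (Q * lam) else if t = 0 then lam - ?c * Q * U 1 * lam
     else if t > 0 then ?c * (U (nat t) - Q * U (nat t + 1)) * lam else 0)"
  have L: "PsiP q Q sc J Kp t v0 = sc Lsc v0"
  proof -
    consider "t = -1" | "t = 0" | "t > 0" | "t < -1" by linarith
    then show ?thesis
    proof cases
      case 1
      then show ?thesis by (simp add: PsiP_def Lsc_def Kv)
    next
      case 2
      then show ?thesis by (simp add: PsiP_def Lsc_def Kv Jv K.scale vs.scale_left_diff_distrib mult_ac)
    next
      case 3
      have k: "Kp (J (nat t) v0 - sc Q (J (Suc (nat t)) v0)) = sc ((U (nat t) - Q * U (Suc (nat t))) * lam) v0"
        using 3 by (simp add: Jv K.diff K.scale Kv vs.scale_left_diff_distrib algebra_simps)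
      show ?thesis using 3 by (simp add: PsiP_def Lsc_def k mult_ac)
    next
      case 4
      then show ?thesis by (simp add: PsiP_def Lsc_def)
    qed
  qed
  have "Lsc = fls_nth (rhs_series q Q \<beta> gs) t"
  proof -
    consider "t = -1" | "t = 0" | "t > 0" | "t < -1" by linarith
    then show ?thesis
    proof cases
      case 1
      then show ?thesis by (simp add: rhs_nth G Lsc_def f0 lam_def mult_ac coef0)
    next
      case 2
      have S1': "S 1 = inverse Q" using S1[of 0] f0 by (simp add: S_def)
      have cU1: "?c * U 1 = f 1 + ?b * inverse Q" using cU[of 1] S1' by simp
      have "Lsc = lam * (1 - Q * (?c * U 1))" using 2 by (simp add: Lsc_def algebra_simps)
      also have "\<dots> = lam * (1 - Q * f 1 - ?b)" using assms(3) by (simp only: cU1) (simp add: field_simps)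
      also have "\<dots> = q ^ ?n * (inverse \<beta> * f 0 - Q * \<beta> * f 1)"
        using assms(4) by (simp add: lam_def f0 field_simps power2_eq_square)
      finally show ?thesis using 2 by (simp add: rhs_nth f_def)
    next
      case 3
      define m where "m = nat t"
      have m: "m \<ge> 1" "t = int m" using 3 by (auto simp: m_def)
      have e1: "?c * U m = f m + ?b * S m" using cU m by simp
      have e2: "?c * U (Suc m) = f (Suc m) + ?b * inverse Q * (S m + f m)" using cU[of "Suc m"] S1[of m] by simp
      have "Lsc = (?c * U m - Q * (?c * U (Suc m))) * lam" using m by (simp add: Lsc_def algebra_simps)
      also have "\<dots> = (f m + ?b * S m - Q * (f (Suc m) + ?b * inverse Q * (S m + f m))) * lam"
        by (simp only: e1 e2)
      also have "\<dots> = (inverse (\<beta>^2) * f m - Q * f (Suc m)) * lam"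
        using assms(3) by (simp add: field_simps add_divide_distrib)
      also have "\<dots> = q ^ ?n * (inverse \<beta> * f m - Q * \<beta> * f (Suc m))"
        using assms(4) by (simp add: lam_def field_simps power2_eq_square)
      finally show ?thesis using m by (simp add: rhs_nth f_def nat_add_distrib)
    next
      case 4
      then show ?thesis by (simp add: rhs_nth G Lsc_def)
    qed
  qed
  then show "PsiP q Q sc J Kp t v0 = sc (fls_nth (rhs_series q Q \<beta> gs) t) v0" using L by simp
qed


end
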